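(* Let $G$ be a digraph, let $i\le 0\le j$ be integers, and let $\Sigma$ be a set of balanced equations in some operation symbols. Then $G^{[i,j]}$ has idempotent polymorphisms satisfying $\Sigma$ if and only if $G$ has idempotent polymorphisms satisfying $\Sigma$.
   Context: Digraphs are finite and loopless. For a digraph $G=(V,E)$ and integers $i\le0\le j$, $G^{[i,j]}$ is the digraph on $\{i,\dots,-1\}\cup V\cup\{1,\dots,j\}$ (disjoint union) whose edges are: $u\to w$ for integers $u<w$ in $\{i,\dots,-1,1,\dots,j\}$; the edges of $E$; $u\to v$ for every integer $u<0$ and $v\in V$; $v\to u$ for every $v\in V$ and integer $u>0$. A polymorphism of arity $k$ is a map $f:V^k\to V$ with $(f(a_1,\dots,a_k),f(b_1,\dots,b_k))\in E$ whenever all $(a_i,b_i)\in E$; it is idempotent if $f(x,\dots,x)=x$. An equation $s(x_1,\dots,x_m)=t(y_1,\dots,y_n)$ is balanced if $\{x_1,\dots,x_m\}=\{y_1,\dots,y_n\}$. Polymorphisms satisfy $\Sigma$ if the equations hold for all values of the variables. *)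

theory Defs
  imports Main
begin

definition digraph :: "'a set \<Rightarrow> ('a \<times> 'a) set \<Rightarrow> bool" where
  "digraph V E \<longleftrightarrow> finite V \<and> E \<subseteq> V \<times> V \<and> (\<forall>v. (v, v) \<notin> E)"

definition ext_vertices :: "'a set \<Rightarrow> int \<Rightarrow> int \<Rightarrow> ('a + int) set" where
  "ext_vertices V i j = Inl ` V \<union> Inr ` ({i..-1} \<union> {1..j})"

definition ext_edges :: "'a set \<Rightarrow> ('a \<times> 'a) set \<Rightarrow> int \<Rightarrow> int \<Rightarrow> (('a + int) \<times> ('a + int)) set" where
  "ext_edges V E i j =
     {(Inr u, Inr w) | u w. u \<in> {i..-1} \<union> {1..j} \<and> w \<in> {i..-1} \<union> {1..j} \<and> u < w}
   \<union> {(Inl a, Inl b) | a b. (a, b) \<in> E}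
   \<union> {(Inr u, Inl v) | u v. u \<in> {i..-1} \<and> v \<in> V}
   \<union> {(Inl v, Inr u) | u v. u \<in> {1..j} \<and> v \<in> V}"

text \<open>A k-ary operation on V is represented as a function on lists; only its values on
  lists of length k with entries in V matter.\<close>
definition polymorphism :: "'a set \<Rightarrow> ('a \<times> 'a) set \<Rightarrow> nat \<Rightarrow> ('a list \<Rightarrow> 'a) \<Rightarrow> bool" where
  "polymorphism V E k f \<longleftrightarrow>
     (\<forall>xs. length xs = k \<and> set xs \<subseteq> V \<longrightarrow> f xs \<in> V) \<and>
     (\<forall>as bs. length as = k \<and> length bs = k \<and> set as \<subseteq> V \<and> set bs \<subseteq> V \<and>
        (\<forall>l<k. (as ! l, bs ! l) \<in> E) \<longrightarrow> (f as, f bs) \<in> E)"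

definition idempotent :: "'a set \<Rightarrow> nat \<Rightarrow> ('a list \<Rightarrow> 'a) \<Rightarrow> bool" where
  "idempotent V k f \<longleftrightarrow> (\<forall>x\<in>V. f (replicate k x) = x)"

text \<open>A height-1 equation s(x_1..x_m) = t(y_1..y_n) over operation symbols 's (with arity
  function ar) and variables 'v is a tuple (s, [x_1..x_m], t, [y_1..y_n]).\<close>
type_synonym ('s, 'v) equation = "'s \<times> 'v list \<times> 's \<times> 'v list"

definition well_formed_eq :: "('s \<Rightarrow> nat) \<Rightarrow> ('s, 'v) equation \<Rightarrow> bool" where
  "well_formed_eq ar e = (case e of (s, xs, t, ys) \<Rightarrow> length xs = ar s \<and> length ys = ar t)"

definition balanced :: "('s, 'v) equation \<Rightarrow> bool" where
  "balanced e = (case e of (s, xs, t, ys) \<Rightarrow> set xs = set ys)"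

definition satisfies_eq :: "'a set \<Rightarrow> ('s \<Rightarrow> 'a list \<Rightarrow> 'a) \<Rightarrow> ('s, 'v) equation \<Rightarrow> bool" where
  "satisfies_eq V I e = (case e of (s, xs, t, ys) \<Rightarrow>
     (\<forall>\<sigma>. (\<forall>x. \<sigma> x \<in> V) \<longrightarrow> I s (map \<sigma> xs) = I t (map \<sigma> ys)))"

definition has_idem_pols_satisfying ::
  "'a set \<Rightarrow> ('a \<times> 'a) set \<Rightarrow> ('s \<Rightarrow> nat) \<Rightarrow> ('s, 'v) equation set \<Rightarrow> bool" where
  "has_idem_pols_satisfying V E ar \<Sigma> \<longleftrightarrow>
     (\<exists>I. (\<forall>s. polymorphism V E (ar s) (I s) \<and> idempotent V (ar s) (I s)) \<and>
          (\<forall>e\<in>\<Sigma>. satisfies_eq V I e))"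

end

theory Submission
  imports Defs
begin

definition NS :: "('a + int) list \<Rightarrow> int set" where
  "NS xs = {u. Inr u \<in> set xs \<and> u < 0}"
definition PS :: "('a + int) list \<Rightarrow> int set" where
  "PS xs = {u. Inr u \<in> set xs \<and> 0 < u}"

definition extop :: "('a list \<Rightarrow> 'a) \<Rightarrow> ('a + int) list \<Rightarrow> 'a + int" where
  "extop f xs = (if NS xs \<noteq> {} then Inr (Min (NS xs))
     else if PS xs \<noteq> {} then Inr (Max (PS xs)) else Inl (f (map projl xs)))"

lemma fin_NS: "finite (NS xs)"
proof -
  have "NS xs \<subseteq> Inr -` set xs" unfolding NS_def by auto
  moreover have "finite (Inr -` set xs :: int set)"
    by (rule finite_vimageI) (auto simp: inj_def)
  ultimately show ?thesis by (rule finite_subset)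
qed

lemma fin_PS: "finite (PS xs)"
proof -
  have "PS xs \<subseteq> Inr -` set xs" unfolding PS_def by auto
  moreover have "finite (Inr -` set xs :: int set)"
    by (rule finite_vimageI) (auto simp: inj_def)
  ultimately show ?thesis by (rule finite_subset)
qed

lemma ee_rr: "(Inr u, Inr w) \<in> ext_edges V E i j \<longleftrightarrow>
   u \<in> {i..-1} \<union> {1..j} \<and> w \<in> {i..-1} \<union> {1..j} \<and> u < w"
  unfolding ext_edges_def by auto
lemma ee_ll: "(Inl a, Inl b) \<in> ext_edges V E i j \<longleftrightarrow> (a, b) \<in> E"
  unfolding ext_edges_def by auto
lemma ee_rl: "(Inr u, Inl v) \<in> ext_edges V E i j \<longleftrightarrow> u \<in> {i..-1} \<and> v \<in> V"
  unfolding ext_edges_def by auto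
lemma ee_lr: "(Inl v, Inr u) \<in> ext_edges V E i j \<longleftrightarrow> u \<in> {1..j} \<and> v \<in> V"
  unfolding ext_edges_def by auto

lemma ev_inr: "Inr u \<in> ext_vertices V i j \<longleftrightarrow> u \<in> {i..-1} \<union> {1..j}"
  unfolding ext_vertices_def by auto
lemma ev_inl: "Inl v \<in> ext_vertices V i j \<longleftrightarrow> v \<in> V"
  unfolding ext_vertices_def by auto

lemma ev_cases:
  assumes "x \<in> ext_vertices V i j"
  obtains v where "x = Inl v" "v \<in> V"
  | u where "x = Inr u" "u \<in> {i..-1}"
  | u where "x = Inr u" "u \<in> {1..j}"
  using assms unfolding ext_vertices_def by auto

lemma all_inl:
  assumes "set xs \<subseteq> ext_vertices V i j" "NS xs = {}" "PS xs = {}" "x \<in> set xs"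
  shows "\<exists>v\<in>V. x = Inl v"
proof -
  have "x \<in> ext_vertices V i j" using assms by auto
  then show ?thesis
  proof (cases rule: ev_cases)
    case (2 u) then show ?thesis using assms(2,4) unfolding NS_def by auto
  next
    case (3 u) then show ?thesis using assms(3,4) unfolding PS_def by auto
  qed auto
qed

lemma extop_in:
  assumes pol: "polymorphism V E k f" and len: "length xs = k"
    and sub: "set xs \<subseteq> ext_vertices V i j"
  shows "extop f xs \<in> ext_vertices V i j"
proof (cases "NS xs \<noteq> {}")
  case True
  then have "Min (NS xs) \<in> NS xs" using fin_NS Min_in by blast
  then have "Inr (Min (NS xs)) \<in> set xs" unfolding NS_def by auto
  then show ?thesis using True sub unfolding extop_def by auto
next
  case F: False
  show ?thesis
  proof (cases "PS xs \<noteq> {}")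
    case True
    then have "Max (PS xs) \<in> PS xs" using fin_PS Max_in by blast
    then have "Inr (Max (PS xs)) \<in> set xs" unfolding PS_def by auto
    then show ?thesis using True F sub unfolding extop_def by auto
  next
    case False
    have "set (map projl xs) \<subseteq> V"
      using all_inl[OF sub] F False by fastforce
    then have "f (map projl xs) \<in> V" using pol len unfolding polymorphism_def by auto
    then show ?thesis using F False unfolding extop_def ext_vertices_def by auto
  qed
qed

lemma extop_pol:
  assumes pol: "polymorphism V E k f"
  shows "polymorphism (ext_vertices V i j) (ext_edges V E i j) k (extop f)"
  unfolding polymorphism_def
proof (intro conjI allI impI)
  fix xs :: "('a + int) list" assume "length xs = k \<and> set xs \<subseteq> ext_vertices V i j"
  then show "extop f xs \<in> ext_vertices V i j" using extop_in[OF pol] by blast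
next
  fix as bs :: "('a + int) list"
  assume A: "length as = k \<and> length bs = k \<and> set as \<subseteq> ext_vertices V i j \<and>
      set bs \<subseteq> ext_vertices V i j \<and> (\<forall>l<k. (as ! l, bs ! l) \<in> ext_edges V E i j)"
  then have la: "length as = k" and lb: "length bs = k" and sa: "set as \<subseteq> ext_vertices V i j"
    and sb: "set bs \<subseteq> ext_vertices V i j"
    and ed: "\<And>l. l < k \<Longrightarrow> (as ! l, bs ! l) \<in> ext_edges V E i j" by auto
  have fa: "extop f as \<in> ext_vertices V i j" using extop_in[OF pol la sa] .
  have fb: "extop f bs \<in> ext_vertices V i j" using extop_in[OF pol lb sb] .
  have a: "\<exists>u. u \<in> NS as \<and> u < w" if "w \<in> NS bs" for w
  proof -
    from that have "Inr w \<in> set bs" "w < 0" unfolding NS_def by auto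
    then obtain l where l: "l < k" "bs ! l = Inr w" "w < 0"
      using lb by (metis in_set_conv_nth)
    have "as ! l \<in> ext_vertices V i j" using sa l la by auto
    then show ?thesis
    proof (cases rule: ev_cases)
      case (1 v) then show ?thesis using ed[OF l(1)] l ee_lr[of v w V E i j] by auto
    next
      case (2 u)
      then have "u < w" using ed[OF l(1)] l ee_rr[of u w V E i j] by auto
      moreover have "u \<in> NS as" using 2 l la nth_mem[of l as] unfolding NS_def by auto
      ultimately show ?thesis by blast
    next
      case (3 u) then show ?thesis using ed[OF l(1)] l ee_rr[of u w V E i j] by auto
    qed
  qed
  have b: "\<exists>w. w \<in> PS bs \<and> u < w" if "u \<in> PS as" for u
  proof -
    from that have "Inr u \<in> set as" "0 < u" unfolding PS_def by auto
    then obtain l where l: "l < k" "as ! l = Inr u" "0 < u"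
      using la by (metis in_set_conv_nth)
    have "bs ! l \<in> ext_vertices V i j" using sb l lb by auto
    then show ?thesis
    proof (cases rule: ev_cases)
      case (1 v) then show ?thesis using ed[OF l(1)] l ee_rl[of u v V E i j] by auto
    next
      case (2 w) then show ?thesis using ed[OF l(1)] l ee_rr[of u w V E i j] by auto
    next
      case (3 w)
      then have "u < w" using ed[OF l(1)] l ee_rr[of u w V E i j] by auto
      moreover have "w \<in> PS bs" using 3 l lb nth_mem[of l bs] unfolding PS_def by auto
      ultimately show ?thesis by blast
    qed
  qed
  show "(extop f as, extop f bs) \<in> ext_edges V E i j"
  proof (cases "NS as \<noteq> {}")
    case NA: True
    have mA: "Min (NS as) \<in> NS as" using NA fin_NS Min_in by blast
    have eA: "extop f as = Inr (Min (NS as))" using NA unfolding extop_def by simp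
    have rA: "Min (NS as) \<in> {i..-1}" using fa[unfolded eA] mA unfolding ev_inr NS_def by auto
    show ?thesis
    proof (cases "NS bs \<noteq> {}")
      case NB: True
      have mB: "Min (NS bs) \<in> NS bs" using NB fin_NS Min_in by blast
      have eB: "extop f bs = Inr (Min (NS bs))" using NB unfolding extop_def by simp
      have rB: "Min (NS bs) \<in> {i..-1}" using fb[unfolded eB] mB unfolding ev_inr NS_def by auto
      obtain u where u: "u \<in> NS as" "u < Min (NS bs)" using a[OF mB] by blast
      have "Min (NS as) \<le> u" by (rule Min_le[OF fin_NS u(1)])
      then have "Min (NS as) < Min (NS bs)" using u(2) by simp
      then show ?thesis unfolding eA eB ee_rr using rA rB by simp
    next
      case False
      have "extop f bs \<in> ext_vertices V i j" by (rule fb)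
      then show ?thesis
      proof (cases rule: ev_cases)
        case (1 v) then show ?thesis unfolding eA using rA by (simp add: ee_rl)
      next
        case (2 u)
        show ?thesis
        proof (cases "PS bs = {}")
          case True then show ?thesis using 2 False unfolding extop_def by simp
        next
          case PB: False
          have "Max (PS bs) \<in> PS bs" using PB fin_PS Max_in by blast
          then have "0 < Max (PS bs)" unfolding PS_def by simp
          moreover have "extop f bs = Inr (Max (PS bs))" using PB False unfolding extop_def by simp
          ultimately show ?thesis using 2 by simp
        qed
      next
        case (3 u) then show ?thesis unfolding eA using rA by (simp add: ee_rr)
      qed
    qed
  next
    case NA: False
    have NB: "NS bs = {}" using a NA by blast
    show ?thesis
    proof (cases "PS as \<noteq> {}")
      case PA: True
      have mA: "Max (PS as) \<in> PS as" using PA fin_PS Max_in by blast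
      have eA: "extop f as = Inr (Max (PS as))" using NA PA unfolding extop_def by simp
      have rA: "Max (PS as) \<in> {1..j}" using fa[unfolded eA] mA unfolding ev_inr PS_def by auto
      obtain w where w: "w \<in> PS bs" "Max (PS as) < w" using b[OF mA] by blast
      then have PB: "PS bs \<noteq> {}" by auto
      have mB: "Max (PS bs) \<in> PS bs" using PB fin_PS Max_in by blast
      have eB: "extop f bs = Inr (Max (PS bs))" using NB PB unfolding extop_def by simp
      have rB: "Max (PS bs) \<in> {1..j}" using fb[unfolded eB] mB unfolding ev_inr PS_def by auto
      have "w \<le> Max (PS bs)" by (rule Max_ge[OF fin_PS w(1)])
      then have "Max (PS as) < Max (PS bs)" using w(2) by simp
      then show ?thesis unfolding eA eB ee_rr using rA rB by simp
    next
      case PA: False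
      have eA: "extop f as = Inl (f (map projl as))" using NA PA unfolding extop_def by simp
      have vA: "f (map projl as) \<in> V" using fa[unfolded eA] unfolding ev_inl by simp
      show ?thesis
      proof (cases "PS bs \<noteq> {}")
        case PB: True
        have mB: "Max (PS bs) \<in> PS bs" using PB fin_PS Max_in by blast
        have eB: "extop f bs = Inr (Max (PS bs))" using NB PB unfolding extop_def by simp
        have rB: "Max (PS bs) \<in> {1..j}" using fb[unfolded eB] mB unfolding ev_inr PS_def by auto
        show ?thesis unfolding eA eB ee_lr using vA rB by simp
      next
        case PB: False
        have eB: "extop f bs = Inl (f (map projl bs))" using NB PB unfolding extop_def by simp
        have sA: "set (map projl as) \<subseteq> V" using all_inl[OF sa] NA PA by fastforce
        have sB: "set (map projl bs) \<subseteq> V" using all_inl[OF sb] NB PB by fastforce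
        have "\<forall>l<k. (map projl as ! l, map projl bs ! l) \<in> E"
        proof (intro allI impI)
          fix l assume l: "l < k"
          have "as ! l \<in> set as" using l la by simp
          then obtain x where x: "as ! l = Inl x" using all_inl[OF sa] NA PA by blast
          have "bs ! l \<in> set bs" using l lb by simp
          then obtain y where y: "bs ! l = Inl y" using all_inl[OF sb] NB PB by blast
          have "(as ! l, bs ! l) \<in> ext_edges V E i j" by (rule ed[OF l])
          then have "(x, y) \<in> E" unfolding x y ee_ll .
          then show "(map projl as ! l, map projl bs ! l) \<in> E"
            using x y l la lb by simp
        qed
        then have "(f (map projl as), f (map projl bs)) \<in> E"
          using pol sA sB la lb unfolding polymorphism_def by auto
        then show ?thesis unfolding eA eB ee_ll .
      qed
    qed
  qed
qed

lemma extop_idem: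
  assumes "idempotent V k f" "0 < k"
  shows "idempotent (ext_vertices V i j) k (extop f)"
  unfolding idempotent_def
proof
  fix x assume "x \<in> ext_vertices V i j"
  then show "extop f (replicate k x) = x"
  proof (cases rule: ev_cases)
    case (1 v)
    then have "NS (replicate k x) = {}" "PS (replicate k x) = {}"
      unfolding NS_def PS_def using assms(2) by auto
    moreover have "map projl (replicate k x) = replicate k v" using 1 by simp
    ultimately show ?thesis using 1 assms(1) unfolding extop_def idempotent_def by auto
  next
    case (2 u)
    then have "NS (replicate k x) = {u}" unfolding NS_def using assms(2) by auto
    then show ?thesis using 2 unfolding extop_def by auto
  next
    case (3 u)
    then have "NS (replicate k x) = {}" "PS (replicate k x) = {u}"
      unfolding NS_def PS_def using assms(2) by auto
    then show ?thesis using 3 unfolding extop_def by auto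
  qed
qed

lemma polE:
  assumes "polymorphism V E k f" "length as = k" "length bs = k" "set as \<subseteq> V" "set bs \<subseteq> V"
    "\<forall>l<k. (as ! l, bs ! l) \<in> E"
  shows "(f as, f bs) \<in> E"
  using assms unfolding polymorphism_def by blast

lemma restr_in:
  assumes pol: "polymorphism (ext_vertices V i j) (ext_edges V E i j) k f"
    and idem: "idempotent (ext_vertices V i j) k f"
    and len: "length xs = k" and sub: "set xs \<subseteq> V"
  shows "f (map Inl xs) \<in> Inl ` V"
proof -
  have sx: "set (map Inl xs) \<subseteq> ext_vertices V i j" using sub unfolding ext_vertices_def by auto
  have "f (map Inl xs) \<in> ext_vertices V i j" using pol len sx unfolding polymorphism_def by auto
  then show ?thesis
  proof (cases rule: ev_cases)
    case (2 u)
    have m: "Inr (-1) \<in> ext_vertices V i j" using 2 unfolding ext_vertices_def by auto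
    have "\<forall>l<k. (replicate k (Inr (-1)) ! l, map Inl xs ! l) \<in> ext_edges V E i j"
      using sub len 2 by (auto simp: ee_rl)
    note ed = this
    have "(f (replicate k (Inr (-1))), f (map Inl xs)) \<in> ext_edges V E i j"
      by (rule polE[OF pol _ _ _ _ ed]) (use len sx m in auto)
    moreover have "f (replicate k (Inr (-1))) = Inr (-1)" using idem m unfolding idempotent_def by auto
    ultimately show ?thesis using 2 by (auto simp: ee_rr)
  next
    case (3 u)
    have m: "Inr 1 \<in> ext_vertices V i j" using 3 unfolding ext_vertices_def by auto
    have "\<forall>l<k. (map Inl xs ! l, replicate k (Inr 1) ! l) \<in> ext_edges V E i j"
      using sub len 3 by (auto simp: ee_lr)
    note ed = this
    have "(f (map Inl xs), f (replicate k (Inr 1))) \<in> ext_edges V E i j"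
      by (rule polE[OF pol _ _ _ _ ed]) (use len sx m in auto)
    moreover have "f (replicate k (Inr 1)) = Inr 1" using idem m unfolding idempotent_def by auto
    ultimately show ?thesis using 3 by (auto simp: ee_rr)
  qed auto
qed

theorem proposition4p7:
  fixes V :: "'a set" and E :: "('a \<times> 'a) set" and i j :: int
    and ar :: "'s \<Rightarrow> nat" and \<Sigma> :: "('s, 'v) equation set"
  assumes "digraph V E"
    and "i \<le> 0" and "0 \<le> j"
    and "\<forall>s. 0 < ar s"
    and "\<forall>e\<in>\<Sigma>. well_formed_eq ar e \<and> balanced e"
  shows "has_idem_pols_satisfying (ext_vertices V i j) (ext_edges V E i j) ar \<Sigma>
     \<longleftrightarrow> has_idem_pols_satisfying V E ar \<Sigma>"
proof
  assume "has_idem_pols_satisfying (ext_vertices V i j) (ext_edges V E i j) ar \<Sigma>"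
  then obtain I where P: "\<And>s. polymorphism (ext_vertices V i j) (ext_edges V E i j) (ar s) (I s)"
    and Id: "\<And>s. idempotent (ext_vertices V i j) (ar s) (I s)"
    and S: "\<forall>e\<in>\<Sigma>. satisfies_eq (ext_vertices V i j) I e"
    unfolding has_idem_pols_satisfying_def by blast
  define J where "J s xs = projl (I s (map Inl xs))" for s xs
  have RI: "\<And>s xs. length xs = ar s \<Longrightarrow> set xs \<subseteq> V \<Longrightarrow> Inl (J s xs) = I s (map Inl xs) \<and> J s xs \<in> V"
    using restr_in[OF P Id] unfolding J_def by fastforce
  show "has_idem_pols_satisfying V E ar \<Sigma>"
    unfolding has_idem_pols_satisfying_def
  proof (intro exI conjI allI ballI)
    fix s
    show "polymorphism V E (ar s) (J s)"
      unfolding polymorphism_def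
    proof (intro conjI allI impI)
      fix xs :: "'a list" assume "length xs = ar s \<and> set xs \<subseteq> V"
      then show "J s xs \<in> V" using RI by blast
    next
      fix as bs :: "'a list"
      assume A: "length as = ar s \<and> length bs = ar s \<and> set as \<subseteq> V \<and> set bs \<subseteq> V \<and>
        (\<forall>l<ar s. (as ! l, bs ! l) \<in> E)"
      have s1: "set (map Inl as) \<subseteq> ext_vertices V i j" "set (map Inl bs) \<subseteq> ext_vertices V i j"
        using A unfolding ext_vertices_def by auto
      have s2: "\<forall>l<ar s. (map Inl as ! l, map Inl bs ! l) \<in> ext_edges V E i j"
        using A by (simp add: ee_ll)
      have "(I s (map Inl as), I s (map Inl bs)) \<in> ext_edges V E i j"
        using P[of s] A s1 s2 unfolding polymorphism_def by simp
      then show "(J s as, J s bs) \<in> E" using RI[of as s] RI[of bs s] A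
        by (metis ee_ll)
    qed
    show "idempotent V (ar s) (J s)"
      using Id[of s] unfolding idempotent_def J_def ext_vertices_def by auto
  next
    fix e assume e: "e \<in> \<Sigma>"
    obtain s xs t ys where ee: "e = (s, xs, t, ys)" by (cases e) auto
    show "satisfies_eq V J e"
      unfolding ee satisfies_eq_def prod.case
    proof (intro allI impI)
      fix \<sigma> :: "'v \<Rightarrow> 'a" assume \<sigma>: "\<forall>x. \<sigma> x \<in> V"
      have "\<forall>x. (Inl \<circ> \<sigma>) x \<in> ext_vertices V i j" using \<sigma> unfolding ext_vertices_def by auto
      then have "I s (map (Inl \<circ> \<sigma>) xs) = I t (map (Inl \<circ> \<sigma>) ys)"
        using S e unfolding ee satisfies_eq_def by auto
      then show "J s (map \<sigma> xs) = J t (map \<sigma> ys)" unfolding J_def by simp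
    qed
  qed
next
  assume "has_idem_pols_satisfying V E ar \<Sigma>"
  then obtain I where P: "\<And>s. polymorphism V E (ar s) (I s)"
    and Id: "\<And>s. idempotent V (ar s) (I s)"
    and S: "\<forall>e\<in>\<Sigma>. satisfies_eq V I e"
    unfolding has_idem_pols_satisfying_def by blast
  show "has_idem_pols_satisfying (ext_vertices V i j) (ext_edges V E i j) ar \<Sigma>"
    unfolding has_idem_pols_satisfying_def
  proof (intro exI[of _ "\<lambda>s. extop (I s)"] conjI allI ballI)
    fix s
    show "polymorphism (ext_vertices V i j) (ext_edges V E i j) (ar s) (extop (I s))"
      using extop_pol[OF P] .
    show "idempotent (ext_vertices V i j) (ar s) (extop (I s))"
      using extop_idem[OF Id] assms(4) by blast
  next
    fix e assume e: "e \<in> \<Sigma>"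
    obtain s xs t ys where ee: "e = (s, xs, t, ys)" by (cases e) auto
    have bal: "set xs = set ys" and lx: "length xs = ar s"
      using assms(5) e unfolding ee balanced_def well_formed_eq_def by auto
    show "satisfies_eq (ext_vertices V i j) (\<lambda>s. extop (I s)) e"
      unfolding ee satisfies_eq_def prod.case
    proof (intro allI impI)
      fix \<sigma> :: "'v \<Rightarrow> 'a + int" assume \<sigma>: "\<forall>x. \<sigma> x \<in> ext_vertices V i j"
      have setq: "set (map \<sigma> xs) = set (map \<sigma> ys)" using bal by simp
      have NSq: "NS (map \<sigma> xs) = NS (map \<sigma> ys)" unfolding NS_def using setq by simp
      have PSq: "PS (map \<sigma> xs) = PS (map \<sigma> ys)" unfolding PS_def using setq by simp
      show "extop (I s) (map \<sigma> xs) = extop (I t) (map \<sigma> ys)"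
      proof (cases "NS (map \<sigma> xs) = {} \<and> PS (map \<sigma> xs) = {}")
        case False then show ?thesis using NSq PSq unfolding extop_def by auto
      next
        case True
        have sx: "set (map \<sigma> xs) \<subseteq> ext_vertices V i j" using \<sigma> by auto
        have sy: "set (map \<sigma> ys) \<subseteq> ext_vertices V i j" using \<sigma> by auto
        have inlx: "\<And>x. x \<in> set xs \<Longrightarrow> \<exists>v\<in>V. \<sigma> x = Inl v"
          using all_inl[OF sx] True by auto
        have inly: "\<And>x. x \<in> set ys \<Longrightarrow> \<exists>v\<in>V. \<sigma> x = Inl v"
          using all_inl[OF sy] True NSq PSq by auto
        have "xs \<noteq> []" using lx assms(4) by (metis length_0_conv less_irrefl)
        then obtain x0 where "x0 \<in> set xs" by (cases xs) auto
        then obtain v0 where v0: "v0 \<in> V" using inlx by blast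
        define \<tau> where "\<tau> x = (if \<sigma> x \<in> Inl ` V then projl (\<sigma> x) else v0)" for x
        have \<tau>: "\<forall>x. \<tau> x \<in> V" unfolding \<tau>_def using v0 by auto
        have eq: "I s (map \<tau> xs) = I t (map \<tau> ys)"
          using S e \<tau> unfolding ee satisfies_eq_def by auto
        have mx: "map projl (map \<sigma> xs) = map \<tau> xs"
          using inlx unfolding \<tau>_def by (auto intro!: map_cong)
        have my: "map projl (map \<sigma> ys) = map \<tau> ys"
          using inly unfolding \<tau>_def by (auto intro!: map_cong)
        have "I s (map projl (map \<sigma> xs)) = I t (map projl (map \<sigma> ys))"
          by (simp only: mx my eq)
        then show ?thesis using True NSq PSq unfolding extop_def by simp
      qed
    qed
  qed
qed

end
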